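(* Let $\sigma^2>0$, $a>1$, let $Z_i$ be i.i.d. $\mathcal{N}(0,\sigma^2)$, $U_0=0$, $U_i=aU_{i-1}+Z_i$, $\hat a_{\mathrm{ML}}(u_1^n)=\frac{\sum_{i=1}^{n-1}u_iu_{i+1}}{\sum_{i=1}^{n-1}u_i^2}$, $P^+(n,a,\eta)=-\frac1n\log\mathbb{P}[\hat a_{\mathrm{ML}}(U_1^n)-a>\eta]$ and $P^-(n,a,\eta)=-\frac1n\log\mathbb{P}[\hat a_{\mathrm{ML}}(U_1^n)-a<-\eta]$. Let $(\eta_n)$ be a positive sequence with $\eta_n=\omega(1/\sqrt n)$, i.e. $\sqrt n\,\eta_n\to\infty$. For each $n$ and $s>0$ define $\alpha_{n,1}=\beta_{n,1}=\frac{\sigma^2s^2-2\eta_ns}{2}$, and for $\ell=2,\ldots,n$, $\alpha_{n,\ell}=\frac{[a^2+2\sigma^2s(a+\eta_n)]\alpha_{n,\ell-1}+\alpha_{n,1}}{1-2\sigma^2\alpha_{n,\ell-1}}$, $\beta_{n,\ell}=\frac{[a^2+2\sigma^2s(-a+\eta_n)]\beta_{n,\ell-1}+\beta_{n,1}}{1-2\sigma^2\beta_{n,\ell-1}}$, and let $\mathcal{S}_n^+=\{s>0:\alpha_{n,\ell}<\frac1{2\sigma^2}\ \forall\ell\in\{1,\ldots,n\}\}$, $\mathcal{S}_n^-=\{s>0:\beta_{n,\ell}<\frac1{2\sigma^2}\ \forall\ell\in\{1,\ldots,n\}\}$. Then for every $n\ge2$, $$P^+(n,a,\eta_n)\ge\sup_{s\in\mathcal{S}_n^+}\frac1{2n}\sum_{\ell=1}^{n-1}\log(1-2\sigma^2\alpha_{n,\ell}),\qquad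 P^-(n,a,\eta_n)\ge\sup_{s\in\mathcal{S}_n^-}\frac1{2n}\sum_{\ell=1}^{n-1}\log(1-2\sigma^2\beta_{n,\ell}),$$ and moreover $$\liminf_{n\to\infty}P^+(n,a,\eta_n)\ge\log a,\qquad \liminf_{n\to\infty}P^-(n,a,\eta_n)\ge\log a.$$
   Context: Logarithms are natural. *)

theory Defs
  imports "HOL-Probability.Probability"
begin

fun ar_proc :: "real \<Rightarrow> (nat \<Rightarrow> 'w \<Rightarrow> real) \<Rightarrow> nat \<Rightarrow> 'w \<Rightarrow> real" where
  "ar_proc a Z 0 w = 0"
| "ar_proc a Z (Suc i) w = a * ar_proc a Z i w + Z (Suc i) w"

definition a_ml :: "nat \<Rightarrow> (nat \<Rightarrow> real) \<Rightarrow> real" where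
  "a_ml n u = (\<Sum>i=1..n-1. u i * u (i+1)) / (\<Sum>i=1..n-1. (u i)^2)"

definition P_plus :: "'w measure \<Rightarrow> (nat \<Rightarrow> 'w \<Rightarrow> real) \<Rightarrow> nat \<Rightarrow> real \<Rightarrow> real \<Rightarrow> real" where
  "P_plus M Z n a \<eta> = - (1 / real n) *
     ln (measure M {w \<in> space M. a_ml n (\<lambda>i. ar_proc a Z i w) - a > \<eta>})"

definition P_minus :: "'w measure \<Rightarrow> (nat \<Rightarrow> 'w \<Rightarrow> real) \<Rightarrow> nat \<Rightarrow> real \<Rightarrow> real \<Rightarrow> real" where
  "P_minus M Z n a \<eta> = - (1 / real n) *
     ln (measure M {w \<in> space M. a_ml n (\<lambda>i. ar_proc a Z i w) - a < - \<eta>})"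

fun rec_seq :: "real \<Rightarrow> real \<Rightarrow> real \<Rightarrow> real \<Rightarrow> real \<Rightarrow> nat \<Rightarrow> real" where
  "rec_seq a b \<sigma> \<eta> s 0 = (\<sigma>^2 * s^2 - 2 * \<eta> * s) / 2"
| "rec_seq a b \<sigma> \<eta> s (Suc k) =
     ((a^2 + 2 * \<sigma>^2 * s * (b + \<eta>)) * rec_seq a b \<sigma> \<eta> s k + rec_seq a b \<sigma> \<eta> s 0)
     / (1 - 2 * \<sigma>^2 * rec_seq a b \<sigma> \<eta> s k)"

definition alpha :: "real \<Rightarrow> real \<Rightarrow> real \<Rightarrow> real \<Rightarrow> nat \<Rightarrow> real" where
  "alpha a \<sigma> \<eta> s l = rec_seq a a \<sigma> \<eta> s (l - 1)"

definition beta :: "real \<Rightarrow> real \<Rightarrow> real \<Rightarrow> real \<Rightarrow> nat \<Rightarrow> real" where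
  "beta a \<sigma> \<eta> s l = rec_seq a (- a) \<sigma> \<eta> s (l - 1)"

end

theory Submission
  imports Defs "HOL-Real_Asymp.Real_Asymp"
begin



fun U :: "real \<Rightarrow> (nat \<Rightarrow> real) \<Rightarrow> nat \<Rightarrow> real" where
  "U a x 0 = 0"
| "U a x (Suc i) = a * U a x i + x (Suc i)"

lemma ar_proc_U: "ar_proc a Z i w = U a (\<lambda>j. Z j w) i"
  by (induction i) auto

lemma U_upd: "i < j \<Longrightarrow> U a (x(j := y)) i = U a x i"
  by (induction i) auto

lemma U_restrict: "i \<le> k \<Longrightarrow> U a (restrict x {1..k}) i = U a x i"
  by (induction i) auto

definition NN :: "real \<Rightarrow> real measure" where
  "NN \<sigma> = density lborel (\<lambda>x. ennreal (normal_density 0 \<sigma> x))"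

lemma sets_NN[simp, measurable_cong]: "sets (NN \<sigma>) = sets borel"
  by (simp add: NN_def)

lemma space_NN[simp]: "space (NN \<sigma>) = UNIV"
  by (simp add: NN_def)

lemma U_meas[measurable]: "i \<le> k \<Longrightarrow> (\<lambda>x. U a x i) \<in> borel_measurable (PiM {1..k} (\<lambda>_. NN \<sigma>))"
proof (induction i)
  case 0 then show ?case by simp
next
  case (Suc i)
  have "(\<lambda>x. x (Suc i)) \<in> borel_measurable (PiM {1..k} (\<lambda>_. NN \<sigma>))"
    using Suc.prems measurable_component_singleton[of "Suc i" "{1..k}" "\<lambda>_. NN \<sigma>"] by auto
  then show ?case using Suc by simp
qed

lemma joint_law:
  fixes Z :: "nat \<Rightarrow> 'w \<Rightarrow> real" and k :: nat
  assumes "prob_space M"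
    and ind: "prob_space.indep_vars M (\<lambda>_. borel) Z {1..}"
    and dist: "\<And>i. i \<ge> 1 \<Longrightarrow> distributed M lborel (Z i) (\<lambda>x. ennreal (normal_density 0 \<sigma> x))"
    and k: "k \<ge> 1"
  shows "distr M (PiM {1..k} (\<lambda>_. borel)) (\<lambda>w. \<lambda>i\<in>{1..k}. Z i w) = PiM {1..k} (\<lambda>_. NN \<sigma>)"
proof -
  interpret prob_space M by fact
  have ind': "indep_vars (\<lambda>_. borel) Z {1..k}"
    using ind by (rule indep_vars_subset) auto
  have rv: "random_variable borel (Z i)" if "i \<in> {1..k}" for i
    using dist[of i] that unfolding distributed_def by auto
  have "distr M (PiM {1..k} (\<lambda>_. borel)) (\<lambda>w. \<lambda>i\<in>{1..k}. Z i w) = PiM {1..k} (\<lambda>i. distr M borel (Z i))"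
  proof -
    have ne: "{1..k::nat} \<noteq> {}" using k by auto
    show ?thesis
      using indep_vars_iff_distr_eq_PiM'[OF ne, where M'="\<lambda>_. borel" and X=Z] rv ind' by auto
  qed
  also have "\<dots> = PiM {1..k} (\<lambda>_. NN \<sigma>)"
  proof (rule PiM_cong)
    fix i assume i: "i \<in> {1..k}"
    have "distr M borel (Z i) = distr M lborel (Z i)"
      by (rule distr_cong) auto
    also have "\<dots> = NN \<sigma>"
      using dist[of i] i unfolding distributed_def NN_def by auto
    finally show "distr M borel (Z i) = NN \<sigma>" .
  qed simp
  finally show ?thesis .
qed




lemma gauss_pointwise:
  fixes \<sigma> \<beta> \<gamma> y :: real
  assumes s: "\<sigma> > 0" and r: "2 * \<sigma>^2 * \<gamma> < 1"
  defines "r \<equiv> 1 - 2 * \<sigma>^2 * \<gamma>"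
  defines "\<tau> \<equiv> \<sigma> / sqrt r"
  defines "\<mu> \<equiv> \<beta> * \<sigma>^2 / r"
  shows "normal_density 0 \<sigma> y * exp (\<beta> * y + \<gamma> * y^2)
       = exp (\<sigma>^2 * \<beta>^2 / (2 * r)) / sqrt r * normal_density \<mu> \<tau> y"
proof -
  have rp: "r > 0" using r by (simp add: r_def)
  have t2: "\<tau>^2 = \<sigma>^2 / r" using rp by (simp add: \<tau>_def power_divide)
  have ex: "- (y^2) / (2 * \<sigma>^2) + (\<beta> * y + \<gamma> * y^2)
      = - ((y - \<mu>)^2) / (2 * \<tau>^2) + \<sigma>^2 * \<beta>^2 / (2 * r)"
  proof -
    have g: "\<gamma> = (1 - r) / (2 * \<sigma>^2)" using s by (simp add: r_def)
    have sp: "\<sigma>^2 > 0" using s by simp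
    have "- (y^2) / (2 * \<sigma>^2) + (\<beta> * y + \<gamma> * y^2) = (2*\<beta>*y*\<sigma>^2*r - y^2*r^2) / (2 * \<sigma>^2 * r)"
      unfolding g using sp rp s by (simp add: field_simps power2_eq_square less_imp_neq[symmetric])
    moreover have "- ((y - \<mu>)^2) / (2 * \<tau>^2) + \<sigma>^2 * \<beta>^2 / (2 * r) = (2*\<beta>*y*\<sigma>^2*r - y^2*r^2) / (2 * \<sigma>^2 * r)"
      unfolding t2 \<mu>_def using sp rp s by (simp add: field_simps power2_eq_square less_imp_neq[symmetric])
    ultimately show ?thesis by simp
  qed
  have sq: "sqrt (2 * pi * \<tau>^2) = sqrt (2 * pi * \<sigma>^2) / sqrt r"
    using rp by (simp add: t2 real_sqrt_divide)
  have "normal_density 0 \<sigma> y * exp (\<beta> * y + \<gamma> * y^2)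
      = 1 / sqrt (2 * pi * \<sigma>^2) * exp (- (y^2) / (2 * \<sigma>^2) + (\<beta> * y + \<gamma> * y^2))"
    unfolding normal_density_def exp_add[of "- (y^2) / (2 * \<sigma>^2)"] by simp
  also have "\<dots> = 1 / sqrt (2 * pi * \<sigma>^2) * exp (- ((y - \<mu>)^2) / (2 * \<tau>^2)) * exp (\<sigma>^2 * \<beta>^2 / (2 * r))"
    by (simp only: ex exp_add)
  also have "\<dots> = exp (\<sigma>^2 * \<beta>^2 / (2 * r)) / sqrt r * normal_density \<mu> \<tau> y"
    unfolding normal_density_def sq using rp s by (simp add: field_simps)
  finally show ?thesis .
qed

lemma gauss_mgf:
  fixes \<sigma> \<beta> \<gamma> :: real
  assumes s: "\<sigma> > 0" and r: "2 * \<sigma>^2 * \<gamma> < 1"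
  shows "(\<integral>\<^sup>+ y. ennreal (exp (\<beta> * y + \<gamma> * y^2)) \<partial>NN \<sigma>)
       = ennreal (exp (\<sigma>^2 * \<beta>^2 / (2 * (1 - 2 * \<sigma>^2 * \<gamma>))) / sqrt (1 - 2 * \<sigma>^2 * \<gamma>))"
proof -
  define rr where "rr = 1 - 2 * \<sigma>^2 * \<gamma>"
  define \<tau> where "\<tau> = \<sigma> / sqrt rr"
  define \<mu> where "\<mu> = \<beta> * \<sigma>^2 / rr"
  define K where "K = exp (\<sigma>^2 * \<beta>^2 / (2 * rr)) / sqrt rr"
  have rp: "rr > 0" using r by (simp add: rr_def)
  have tp: "\<tau> > 0" using rp s by (simp add: \<tau>_def)
  have K0: "K \<ge> 0" using rp by (simp add: K_def)
  have "(\<integral>\<^sup>+ y. ennreal (exp (\<beta> * y + \<gamma> * y^2)) \<partial>NN \<sigma>)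
      = (\<integral>\<^sup>+ y. ennreal (normal_density 0 \<sigma> y) * ennreal (exp (\<beta> * y + \<gamma> * y^2)) \<partial>lborel)"
    unfolding NN_def by (subst nn_integral_density) auto
  also have "\<dots> = (\<integral>\<^sup>+ y. ennreal K * ennreal (normal_density \<mu> \<tau> y) \<partial>lborel)"
  proof (rule nn_integral_cong)
    fix y
    have "normal_density 0 \<sigma> y * exp (\<beta> * y + \<gamma> * y^2) = K * normal_density \<mu> \<tau> y"
      using gauss_pointwise[OF s r, where \<beta>=\<beta> and y=y] by (simp add: K_def rr_def \<tau>_def \<mu>_def)
    then show "ennreal (normal_density 0 \<sigma> y) * ennreal (exp (\<beta> * y + \<gamma> * y^2)) = ennreal K * ennreal (normal_density \<mu> \<tau> y)"
      using K0 by (simp add: ennreal_mult[symmetric])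
  qed
  also have "\<dots> = ennreal K * (\<integral>\<^sup>+ y. ennreal (normal_density \<mu> \<tau> y) \<partial>lborel)"
    by (rule nn_integral_cmult) auto
  also have "(\<integral>\<^sup>+ y. ennreal (normal_density \<mu> \<tau> y) \<partial>lborel) = 1"
    using tp by (subst nn_integral_eq_integral) auto
  finally show ?thesis by (simp add: K_def rr_def)
qed




definition Phi :: "real \<Rightarrow> real \<Rightarrow> real \<Rightarrow> real \<Rightarrow> (nat \<Rightarrow> real) \<Rightarrow> nat \<Rightarrow> real" where
  "Phi a p q \<gamma> x k = (\<Sum>i<k. p * U a x i * U a x (Suc i) + q * (U a x i)^2) + \<gamma> * (U a x k)^2"

definition ff :: "real \<Rightarrow> real \<Rightarrow> real \<Rightarrow> real \<Rightarrow> real \<Rightarrow> real" where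
  "ff \<sigma> a p q \<gamma> = \<gamma> * a^2 + p * a + q + \<sigma>^2 * (2 * \<gamma> * a + p)^2 / (2 * (1 - 2 * \<sigma>^2 * \<gamma>))"

lemma Phi_meas[measurable]:
  "k \<le> m \<Longrightarrow> (\<lambda>x. Phi a p q \<gamma> x k) \<in> borel_measurable (PiM {1..m} (\<lambda>_. NN \<sigma>))"
  unfolding Phi_def
  by (intro borel_measurable_add borel_measurable_sum borel_measurable_times borel_measurable_power
      U_meas borel_measurable_const) auto

lemma Phi_0[simp]: "Phi a p q \<gamma> x 0 = 0"
  by (simp add: Phi_def)

lemma Phi_upd:
  "Phi a p q \<gamma> (x(Suc k := y)) (Suc k)
     = (Phi a p q 0 x k + (\<gamma> * a^2 + p * a + q) * (U a x k)^2) + ((2 * \<gamma> * a + p) * U a x k * y + \<gamma> * y^2)"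
proof -
  have "(\<Sum>i<k. p * U a (x(Suc k := y)) i * U a (x(Suc k := y)) (Suc i) + q * (U a (x(Suc k := y)) i)^2)
      = (\<Sum>i<k. p * U a x i * U a x (Suc i) + q * (U a x i)^2)"
    by (intro sum.cong) (auto simp: U_upd)
  moreover have "U a (x(Suc k := y)) k = U a x k" by (simp add: U_upd)
  ultimately show ?thesis
    by (simp add: Phi_def power2_eq_square algebra_simps)
qed

lemma sf_NN: "\<sigma> > 0 \<Longrightarrow> product_sigma_finite (\<lambda>_. NN \<sigma>)"
  unfolding product_sigma_finite_def NN_def
  by (auto intro: prob_space_imp_sigma_finite prob_space_normal_density)

lemma iter_integral:
  assumes s: "\<sigma> > 0"
  shows "\<forall>g. (\<forall>j<k. 2 * \<sigma>^2 * g j < 1) \<longrightarrow> (\<forall>j. Suc j < k \<longrightarrow> g (Suc j) = ff \<sigma> a p q (g j)) \<longrightarrow>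
    (\<integral>\<^sup>+ x. ennreal (exp (Phi a p q (g 0) x k)) \<partial>PiM {1..k} (\<lambda>_. NN \<sigma>))
      = ennreal (\<Prod>j<k. 1 / sqrt (1 - 2 * \<sigma>^2 * g j))"
proof (induction k)
  case 0
  show ?case by (simp add: nn_integral_count_space_finite PiM_empty)
next
  case (Suc k)
  interpret product_sigma_finite "\<lambda>_. NN \<sigma>" using sf_NN[OF s] .
  show ?case
  proof (intro allI impI)
    fix g :: "nat \<Rightarrow> real"
    assume lt: "\<forall>j<Suc k. 2 * \<sigma>^2 * g j < 1"
      and rec: "\<forall>j. Suc j < Suc k \<longrightarrow> g (Suc j) = ff \<sigma> a p q (g j)"
    define \<gamma> where "\<gamma> = g 0"
    define r where "r = 1 - 2 * \<sigma>^2 * \<gamma>"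
    have g0: "2 * \<sigma>^2 * \<gamma> < 1" using lt by (auto simp: \<gamma>_def)
    have rp: "r > 0" using g0 by (simp add: r_def)
    have ins: "{1..Suc k} = insert (Suc k) {1..k}" by auto
    have inner: "(\<integral>\<^sup>+ y. ennreal (exp (Phi a p q \<gamma> (x(Suc k := y)) (Suc k))) \<partial>NN \<sigma>)
        = ennreal (1 / sqrt r) * ennreal (exp (Phi a p q (g (Suc 0)) x k))" for x
    proof -
      define A where "A = Phi a p q 0 x k + (\<gamma> * a^2 + p * a + q) * (U a x k)^2"
      define \<beta> where "\<beta> = (2 * \<gamma> * a + p) * U a x k"
      have "(\<integral>\<^sup>+ y. ennreal (exp (Phi a p q \<gamma> (x(Suc k := y)) (Suc k))) \<partial>NN \<sigma>)
          = (\<integral>\<^sup>+ y. ennreal (exp A) * ennreal (exp (\<beta> * y + \<gamma> * y^2)) \<partial>NN \<sigma>)"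
        by (intro nn_integral_cong) (simp add: Phi_upd A_def \<beta>_def exp_add ennreal_mult[symmetric] algebra_simps)
      also have "\<dots> = ennreal (exp A) * (\<integral>\<^sup>+ y. ennreal (exp (\<beta> * y + \<gamma> * y^2)) \<partial>NN \<sigma>)"
        by (rule nn_integral_cmult) auto
      also have "\<dots> = ennreal (exp A) * ennreal (exp (\<sigma>^2 * \<beta>^2 / (2 * r)) / sqrt r)"
        using gauss_mgf[OF s g0, of \<beta>] by (simp add: r_def)
      also have "\<dots> = ennreal (1 / sqrt r) * ennreal (exp (A + \<sigma>^2 * \<beta>^2 / (2 * r)))"
        using rp by (simp add: ennreal_mult[symmetric] exp_add)
      also have "A + \<sigma>^2 * \<beta>^2 / (2 * r) = Phi a p q (ff \<sigma> a p q \<gamma>) x k"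
      proof -
        have e1: "Phi a p q (ff \<sigma> a p q \<gamma>) x k = Phi a p q 0 x k + ff \<sigma> a p q \<gamma> * (U a x k)^2"
          by (simp add: Phi_def)
        have e2: "\<sigma>^2 * \<beta>^2 / (2 * r) = \<sigma>^2 * (2 * \<gamma> * a + p)^2 / (2 * r) * (U a x k)^2"
          by (simp add: \<beta>_def power_mult_distrib)
        show ?thesis unfolding e1 e2 by (simp add: A_def ff_def r_def algebra_simps)
      qed
      also have "Phi a p q (ff \<sigma> a p q \<gamma>) x k = Phi a p q (g (Suc 0)) x k"
      proof (cases k)
        case 0 then show ?thesis by simp
      next
        case (Suc m) then show ?thesis using rec by (simp add: \<gamma>_def)
      qed
      finally show ?thesis .
    qed
    have "(\<integral>\<^sup>+ x. ennreal (exp (Phi a p q (g 0) x (Suc k))) \<partial>PiM {1..Suc k} (\<lambda>_. NN \<sigma>))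
        = (\<integral>\<^sup>+ x. (\<integral>\<^sup>+ y. ennreal (exp (Phi a p q \<gamma> (x(Suc k := y)) (Suc k))) \<partial>NN \<sigma>) \<partial>PiM {1..k} (\<lambda>_. NN \<sigma>))"
    proof -
      have m1: "(\<lambda>x. Phi a p q \<gamma> x (Suc k)) \<in> borel_measurable (PiM {1..Suc k} (\<lambda>_. NN \<sigma>))"
        by (rule Phi_meas) simp
      have m2: "(\<lambda>x. ennreal (exp (Phi a p q \<gamma> x (Suc k)))) \<in> borel_measurable (PiM (insert (Suc k) {1..k}) (\<lambda>_. NN \<sigma>))"
        using m1 unfolding ins by measurable
      show ?thesis
        unfolding ins \<gamma>_def[symmetric]
        by (rule product_nn_integral_insert[OF _ _ m2]) auto
    qed
    also have "\<dots> = (\<integral>\<^sup>+ x. ennreal (1 / sqrt r) * ennreal (exp (Phi a p q (g (Suc 0)) x k)) \<partial>PiM {1..k} (\<lambda>_. NN \<sigma>))"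
      by (simp add: inner)
    also have "\<dots> = ennreal (1 / sqrt r) * (\<integral>\<^sup>+ x. ennreal (exp (Phi a p q (g (Suc 0)) x k)) \<partial>PiM {1..k} (\<lambda>_. NN \<sigma>))"
    proof -
      have m1: "(\<lambda>x. Phi a p q (g (Suc 0)) x k) \<in> borel_measurable (PiM {1..k} (\<lambda>_. NN \<sigma>))"
        by (rule Phi_meas) simp
      have m2: "(\<lambda>x. ennreal (exp (Phi a p q (g (Suc 0)) x k))) \<in> borel_measurable (PiM {1..k} (\<lambda>_. NN \<sigma>))"
        using m1 by measurable
      show ?thesis by (rule nn_integral_cmult[OF m2])
    qed
    also have "(\<integral>\<^sup>+ x. ennreal (exp (Phi a p q (g (Suc 0)) x k)) \<partial>PiM {1..k} (\<lambda>_. NN \<sigma>))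
        = ennreal (\<Prod>j<k. 1 / sqrt (1 - 2 * \<sigma>^2 * g (Suc j)))"
    proof -
      have h1: "\<forall>j<k. 2 * \<sigma>^2 * g (Suc j) < 1" using lt by auto
      have h2: "\<forall>j. Suc j < k \<longrightarrow> g (Suc (Suc j)) = ff \<sigma> a p q (g (Suc j))" using rec by auto
      show ?thesis using Suc.IH[THEN spec[of _ "\<lambda>j. g (Suc j)"]] h1 h2 by blast
    qed
    also have "ennreal (1 / sqrt r) * ennreal (\<Prod>j<k. 1 / sqrt (1 - 2 * \<sigma>^2 * g (Suc j)))
        = ennreal (\<Prod>j<Suc k. 1 / sqrt (1 - 2 * \<sigma>^2 * g j))"
    proof -
      have pn: "0 \<le> (\<Prod>j<k. 1 / sqrt (1 - 2 * \<sigma>^2 * g (Suc j)))"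
        using lt by (intro prod_nonneg) auto
      have "ennreal (1 / sqrt r) * ennreal (\<Prod>j<k. 1 / sqrt (1 - 2 * \<sigma>^2 * g (Suc j)))
          = ennreal (1 / sqrt r * (\<Prod>j<k. 1 / sqrt (1 - 2 * \<sigma>^2 * g (Suc j))))"
        by (rule ennreal_mult[symmetric]) (use rp pn in auto)
      also have "1 / sqrt r * (\<Prod>j<k. 1 / sqrt (1 - 2 * \<sigma>^2 * g (Suc j))) = (\<Prod>j<Suc k. 1 / sqrt (1 - 2 * \<sigma>^2 * g j))"
        by (simp only: prod.lessThan_Suc_shift r_def \<gamma>_def)
      finally show ?thesis .
    qed
    finally show "(\<integral>\<^sup>+ x. ennreal (exp (Phi a p q (g 0) x (Suc k))) \<partial>PiM {1..Suc k} (\<lambda>_. NN \<sigma>))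
        = ennreal (\<Prod>j<Suc k. 1 / sqrt (1 - 2 * \<sigma>^2 * g j))" .
  qed
qed




lemma prob_NN: "\<sigma> > 0 \<Longrightarrow> prob_space (NN \<sigma>)"
  unfolding NN_def by (rule prob_space_normal_density)

lemma prob_PiNN: "\<sigma> > 0 \<Longrightarrow> prob_space (PiM {1..n} (\<lambda>_. NN \<sigma>))"
  by (intro prob_space_PiM prob_NN)

lemma event_law:
  fixes Z :: "nat \<Rightarrow> 'w \<Rightarrow> real" and n :: nat
  assumes "prob_space M"
    and ind: "prob_space.indep_vars M (\<lambda>_. borel) Z {1..}"
    and dist: "\<And>i. i \<ge> 1 \<Longrightarrow> distributed M lborel (Z i) (\<lambda>x. ennreal (normal_density 0 \<sigma> x))"
    and n: "n \<ge> 1" and E: "E \<in> sets (PiM {1..n} (\<lambda>_. NN \<sigma>))"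
  shows "measure M {w \<in> space M. (\<lambda>i\<in>{1..n}. Z i w) \<in> E} = measure (PiM {1..n} (\<lambda>_. NN \<sigma>)) E"
proof -
  have X: "(\<lambda>w. \<lambda>i\<in>{1..n}. Z i w) \<in> measurable M (PiM {1..n} (\<lambda>_. borel))"
    using dist unfolding distributed_def by (intro measurable_restrict) auto
  have E': "E \<in> sets (PiM {1..n} (\<lambda>_. borel))"
    using E by (subst sets_PiM_cong[of _ _ _ "\<lambda>_. NN \<sigma>"]) auto
  have "measure (PiM {1..n} (\<lambda>_. NN \<sigma>)) E = measure (distr M (PiM {1..n} (\<lambda>_. borel)) (\<lambda>w. \<lambda>i\<in>{1..n}. Z i w)) E"
    using joint_law[OF assms(1-3) n] by simp
  also have "\<dots> = measure M ((\<lambda>w. \<lambda>i\<in>{1..n}. Z i w) -` E \<inter> space M)"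
    by (rule measure_distr[OF X E'])
  finally show ?thesis by (simp add: Int_def conj_commute vimage_def Collect_conj_eq[symmetric])
qed

lemma chernoff:
  assumes s: "\<sigma> > 0"
    and E: "E \<in> sets (PiM {1..n} (\<lambda>_. NN \<sigma>))"
    and pos: "\<And>x. x \<in> E \<Longrightarrow> Phi a p q 0 x n \<ge> 0"
    and lt: "\<forall>j<n. 2 * \<sigma>^2 * g j < 1"
    and rec: "\<forall>j. Suc j < n \<longrightarrow> g (Suc j) = ff \<sigma> a p q (g j)"
    and g0: "g 0 = 0"
  shows "measure (PiM {1..n} (\<lambda>_. NN \<sigma>)) E \<le> (\<Prod>j<n. 1 / sqrt (1 - 2 * \<sigma>^2 * g j))"
proof -
  let ?P = "PiM {1..n} (\<lambda>_. NN \<sigma>)"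
  interpret P: prob_space ?P using prob_PiNN[OF s] .
  have "emeasure ?P E = (\<integral>\<^sup>+ x. indicator E x \<partial>?P)"
    using E by simp
  also have "\<dots> \<le> (\<integral>\<^sup>+ x. ennreal (exp (Phi a p q 0 x n)) \<partial>?P)"
  proof (rule nn_integral_mono)
    fix x
    show "indicator E x \<le> ennreal (exp (Phi a p q 0 x n))"
    proof (cases "x \<in> E")
      case True
      then have "1 \<le> exp (Phi a p q 0 x n)" using pos by simp
      then show ?thesis using True by simp
    qed simp
  qed
  also have "\<dots> = ennreal (\<Prod>j<n. 1 / sqrt (1 - 2 * \<sigma>^2 * g j))"
  proof -
    have "(\<integral>\<^sup>+ x. ennreal (exp (Phi a p q (g 0) x n)) \<partial>?P) = ennreal (\<Prod>j<n. 1 / sqrt (1 - 2 * \<sigma>^2 * g j))"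
      using iter_integral[OF s, of n a p q, THEN spec, of g] lt rec by blast
    then show ?thesis using g0 by simp
  qed
  finally have "emeasure ?P E \<le> ennreal (\<Prod>j<n. 1 / sqrt (1 - 2 * \<sigma>^2 * g j))" .
  moreover have "0 \<le> (\<Prod>j<n. 1 / sqrt (1 - 2 * \<sigma>^2 * g j))"
    using lt by (intro prod_nonneg) auto
  moreover have "emeasure ?P E = ennreal (measure ?P E)" by (rule P.emeasure_eq_measure)
  ultimately show ?thesis
    by (simp add: ennreal_le_iff)
qed

lemma NN_interval_pos:
  assumes s: "\<sigma> > 0" and lh: "l < h"
  shows "emeasure (NN \<sigma>) {l..h} > 0"
proof (rule ccontr)
  assume "\<not> ?thesis"
  then have z: "emeasure (NN \<sigma>) {l..h} = 0" by simp
  have "(\<integral>\<^sup>+ x. ennreal (normal_density 0 \<sigma> x) * indicator {l..h} x \<partial>lborel) = 0"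
    using z unfolding NN_def by (subst (asm) emeasure_density) auto
  then have "AE x in lborel. ennreal (normal_density 0 \<sigma> x) * indicator {l..h} x = 0"
    by (subst (asm) nn_integral_0_iff_AE) auto
  then have "AE x in lborel. x \<notin> {l..h}"
  proof -
    have nz: "\<And>x. normal_density 0 \<sigma> x \<noteq> 0" using normal_density_pos[OF s] by (simp add: less_imp_neq[symmetric])
    show "AE x in lborel. ennreal (normal_density 0 \<sigma> x) * indicator {l..h} x = 0 \<Longrightarrow> AE x in lborel. x \<notin> {l..h}"
      using nz by (auto elim!: AE_mp intro!: AE_I2 simp: indicator_def)
  qed
  then have "emeasure lborel {l..h} = 0"
    by (subst (asm) AE_iff_measurable[of "{l..h}"]) auto
  then show False using lh by simp
qed




definition Dsum :: "real \<Rightarrow> (nat \<Rightarrow> real) \<Rightarrow> nat \<Rightarrow> real" where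
  "Dsum a x n = (\<Sum>i=1..n-1. (U a x i)^2)"
definition Nsum :: "real \<Rightarrow> (nat \<Rightarrow> real) \<Rightarrow> nat \<Rightarrow> real" where
  "Nsum a x n = (\<Sum>i=1..n-1. U a x i * U a x (i+1))"
definition Rsum :: "real \<Rightarrow> (nat \<Rightarrow> real) \<Rightarrow> nat \<Rightarrow> real" where
  "Rsum a x n = (\<Sum>i=1..n-1. U a x i * x (i+1))"

lemma a_ml_U: "a_ml n (U a x) = Nsum a x n / Dsum a x n"
  by (simp add: a_ml_def Nsum_def Dsum_def)

lemma Nsum_eq: "Nsum a x n = a * Dsum a x n + Rsum a x n"
  by (simp add: Nsum_def Dsum_def Rsum_def sum_distrib_left sum.distrib[symmetric] power2_eq_square algebra_simps)

lemma Phi_sum: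
  assumes "n \<ge> 1"
  shows "Phi a p q 0 x n = p * Nsum a x n + q * Dsum a x n"
proof -
  have "{..<n} = insert 0 {1..n-1}" using assms by auto
  then have "Phi a p q 0 x n = (\<Sum>i\<in>{1..n-1}. p * U a x i * U a x (Suc i) + q * (U a x i)^2)"
    by (simp add: Phi_def)
  then show ?thesis
    by (simp add: Nsum_def Dsum_def sum.distrib sum_distrib_left mult.assoc)
qed

lemma Dsum_nonneg: "Dsum a x n \<ge> 0"
  by (simp add: Dsum_def sum_nonneg)

lemma Dsum_zero: "Dsum a x n = 0 \<Longrightarrow> Nsum a x n = 0"
proof -
  assume "Dsum a x n = 0"
  then have "\<forall>i\<in>{1..n-1}. (U a x i)^2 = 0"
    unfolding Dsum_def by (subst (asm) sum_nonneg_eq_0_iff) auto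
  then show ?thesis unfolding Nsum_def by (intro sum.neutral) auto
qed

lemma a_ml_meas[measurable]:
  "(\<lambda>x. a_ml n (U a x)) \<in> borel_measurable (PiM {1..n} (\<lambda>_. NN \<sigma>))"
  unfolding a_ml_U Nsum_def Dsum_def
  by (intro borel_measurable_divide borel_measurable_sum borel_measurable_times borel_measurable_power
      U_meas) auto

definition bx :: "nat \<Rightarrow> real \<Rightarrow> nat \<Rightarrow> real set" where
  "bx n c i = (if i = 1 then {1..2} else if i = n then {c..c+1} else {0..1})"

lemma U_box:
  assumes a: "a > 1" and n: "n \<ge> 2" and x: "x \<in> PiE {1..n} (bx n c)"
  shows "1 \<le> i \<Longrightarrow> i \<le> n - 1 \<Longrightarrow> 1 \<le> U a x i \<and> U a x i \<le> 2 * (a+1)^i"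
proof (induction i)
  case 0 then show ?case by simp
next
  case (Suc i)
  show ?case
  proof (cases "i = 0")
    case True
    have "x 1 \<in> bx n c 1" using n by (intro PiE_mem[OF x]) auto
    then have "x 1 \<in> {1..2}" by (simp add: bx_def)
    then show ?thesis using True a by simp
  next
    case False
    then have ih: "1 \<le> U a x i \<and> U a x i \<le> 2 * (a+1)^i" using Suc by auto
    have "x (Suc i) \<in> bx n c (Suc i)" using Suc.prems by (intro PiE_mem[OF x]) auto
    moreover have "Suc i \<noteq> n" "Suc i \<noteq> 1" using False Suc.prems n by auto
    ultimately have xi: "0 \<le> x (Suc i) \<and> x (Suc i) \<le> 1" by (simp add: bx_def)
    have "1 \<le> (a+1)^i" using a by (intro one_le_power) simp
    then have p1: "1 \<le> 2 * (a+1)^i" by simp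
    have "a * U a x i \<le> a * (2 * (a+1)^i)" using ih a by simp
    then have up: "a * U a x i + x (Suc i) \<le> 2 * (a+1)^(Suc i)" using xi p1 by (simp add: algebra_simps)
    have "1 * 1 \<le> a * U a x i" by (rule mult_mono) (use ih a in auto)
    then show ?thesis using up xi by simp
  qed
qed




lemma box_facts:
  assumes a: "a > 1" and n: "n \<ge> 2" and x: "x \<in> PiE {1..n} (bx n c)"
  defines "W \<equiv> 2 * (a+1)^n"
  shows "1 \<le> Dsum a x n" "Dsum a x n \<le> real (n-1) * W^2"
    "Rsum a x n = (\<Sum>i=1..n-2. U a x i * x (i+1)) + U a x (n-1) * x n"
    "0 \<le> (\<Sum>i=1..n-2. U a x i * x (i+1))" "(\<Sum>i=1..n-2. U a x i * x (i+1)) \<le> real (n-1) * W"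
    "1 \<le> U a x (n-1)" "U a x (n-1) \<le> W" "c \<le> x n" "x n \<le> c + 1"
proof -
  have Ub: "1 \<le> U a x i \<and> U a x i \<le> W" if "i \<in> {1..n-1}" for i
  proof -
    have h: "1 \<le> U a x i \<and> U a x i \<le> 2 * (a+1)^i" using U_box[OF a n x] that by auto
    have "(a+1)^i \<le> (a+1)^n" using that a by (intro power_increasing) auto
    then show ?thesis using h by (simp add: W_def)
  qed
  have "1 \<in> {1..n-1}" using n by auto
  from Ub[OF this] have W1: "1 \<le> W" by linarith
  have "(\<Sum>i=1..n-1. (1::real)) \<le> Dsum a x n"
    unfolding Dsum_def using Ub by (intro sum_mono) (simp add: one_le_power)
  then show "1 \<le> Dsum a x n" using n by simp
  have "Dsum a x n \<le> (\<Sum>i=1..n-1. W^2)"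
  proof (unfold Dsum_def, intro sum_mono power_mono)
    fix i assume "i \<in> {1..n-1}"
    with Ub[OF this] show "U a x i \<le> W" "0 \<le> U a x i" by auto
  qed
  then show "Dsum a x n \<le> real (n-1) * W^2" by simp
  have ins: "{1..n-1} = insert (n-1) {1..n-2}" using n by auto
  have nin: "n-1 \<notin> {1..n-2}" using n by auto
  have sn: "n - 1 + 1 = n" using n by auto
  show "Rsum a x n = (\<Sum>i=1..n-2. U a x i * x (i+1)) + U a x (n-1) * x n"
    unfolding Rsum_def ins sum.insert[OF finite_atLeastAtMost nin] sn by simp
  have xi: "0 \<le> x (i+1) \<and> x (i+1) \<le> 1" if "i \<in> {1..n-2}" for i
  proof -
    have "x (i+1) \<in> bx n c (i+1)" using that n by (intro PiE_mem[OF x]) auto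
    moreover have "i + 1 \<noteq> n" "i + 1 \<noteq> 1" using that n by auto
    ultimately show ?thesis by (simp add: bx_def)
  qed
  show "0 \<le> (\<Sum>i=1..n-2. U a x i * x (i+1))"
  proof (rule sum_nonneg)
    fix i assume i: "i \<in> {1..n-2}"
    then have "i \<in> {1..n-1}" by auto
    from Ub[OF this] xi[OF i] show "0 \<le> U a x i * x (i+1)" by simp
  qed
  have "(\<Sum>i=1..n-2. U a x i * x (i+1)) \<le> (\<Sum>i=1..n-2. W)"
  proof (rule sum_mono)
    fix i assume i: "i \<in> {1..n-2}"
    have "i \<in> {1..n-1}" using i by auto
    from Ub[OF this] xi[OF i] have "U a x i * x (i+1) \<le> W * 1" using W1 by (intro mult_mono) auto
    then show "U a x i * x (i+1) \<le> W" by simp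
  qed
  also have "\<dots> \<le> real (n-1) * W" using W1 n by (simp add: of_nat_diff)
  finally show "(\<Sum>i=1..n-2. U a x i * x (i+1)) \<le> real (n-1) * W" .
  show "1 \<le> U a x (n-1)" "U a x (n-1) \<le> W" using Ub[of "n-1"] n by auto
  have "x n \<in> bx n c n" using n by (intro PiE_mem[OF x]) auto
  then show "c \<le> x n" "x n \<le> c + 1" using n by (auto simp: bx_def)
qed

lemma aml_RD: "Dsum a x n > 0 \<Longrightarrow> a_ml n (U a x) - a = Rsum a x n / Dsum a x n"
  by (simp add: a_ml_U Nsum_eq field_simps)

lemma box_plus:
  assumes a: "a > 1" and n: "n \<ge> 2" and eta: "\<eta> > 0"
    and x: "x \<in> PiE {1..n} (bx n (\<eta> * real (n-1) * (2 * (a+1)^n)^2 + 1))"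
  shows "a_ml n (U a x) - a > \<eta>"
proof -
  define W where "W = 2 * (a+1)^n"
  define c where "c = \<eta> * real (n-1) * W^2 + 1"
  note bf = box_facts[OF a n x[folded W_def, folded c_def], folded W_def]
  have c1: "c \<ge> 1" using eta by (simp add: c_def)
  have "U a x (n-1) * x n \<ge> 1 * c" using bf(6,8) c1 by (intro mult_mono) auto
  then have "Rsum a x n \<ge> c" using bf(3,4) by simp
  moreover have "\<eta> * Dsum a x n \<le> \<eta> * (real (n-1) * W^2)" using bf(2) eta by simp
  ultimately have "Rsum a x n > \<eta> * Dsum a x n" by (simp add: c_def)
  then have "\<eta> < Rsum a x n / Dsum a x n" using bf(1) by (simp add: pos_less_divide_eq)
  then show ?thesis using aml_RD[of a x n] bf(1) by simp
qed

lemma box_minus: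
  assumes a: "a > 1" and n: "n \<ge> 2" and eta: "\<eta> > 0"
    and x: "x \<in> PiE {1..n} (bx n (- (\<eta> * real (n-1) * (2 * (a+1)^n)^2 + real (n-1) * (2 * (a+1)^n) + 2)))"
  shows "a_ml n (U a x) - a < - \<eta>"
proof -
  define W where "W = 2 * (a+1)^n"
  define c where "c = - (\<eta> * real (n-1) * W^2 + real (n-1) * W + 2)"
  note bf = box_facts[OF a n x[folded W_def, folded c_def], folded W_def]
  have W0: "W \<ge> 0" using a by (simp add: W_def)
  have "0 \<le> \<eta> * real (n-1) * W^2" "0 \<le> real (n-1) * W" using eta W0 by auto
  then have c1: "c + 1 < 0" by (simp add: c_def)
  have "U a x (n-1) * x n \<le> U a x (n-1) * (c + 1)" using bf(6,9) by (intro mult_left_mono) auto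
  also have "\<dots> \<le> 1 * (c + 1)" using bf(6) c1 by (intro mult_right_mono_neg) auto
  finally have "Rsum a x n \<le> real (n-1) * W + (c + 1)" using bf(3,5) by simp
  moreover have "\<eta> * Dsum a x n \<le> \<eta> * (real (n-1) * W^2)" using bf(2) eta by simp
  ultimately have "Rsum a x n < - \<eta> * Dsum a x n" by (simp add: c_def)
  then have "Rsum a x n / Dsum a x n < - \<eta>" using bf(1) by (simp add: pos_divide_less_eq)
  then show ?thesis using aml_RD[of a x n] bf(1) by simp
qed




lemma core_bound:
  assumes s: "\<sigma> > 0" and n: "n \<ge> 1"
    and E: "E \<in> sets (PiM {1..n} (\<lambda>_. NN \<sigma>))"
    and mpos: "measure (PiM {1..n} (\<lambda>_. NN \<sigma>)) E > 0"
    and pos: "\<And>x. x \<in> E \<Longrightarrow> Phi a p q 0 x n \<ge> 0"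
    and lt: "\<forall>j<n. 2 * \<sigma>^2 * g j < 1"
    and rec: "\<forall>j. Suc j < n \<longrightarrow> g (Suc j) = ff \<sigma> a p q (g j)"
    and g0: "g 0 = 0"
  shows "1 / (2 * real n) * (\<Sum>j<n. ln (1 - 2 * \<sigma>^2 * g j))
      \<le> - (1 / real n) * ln (measure (PiM {1..n} (\<lambda>_. NN \<sigma>)) E)"
proof -
  let ?m = "measure (PiM {1..n} (\<lambda>_. NN \<sigma>)) E"
  have tp: "\<And>j. j < n \<Longrightarrow> 1 - 2 * \<sigma>^2 * g j > 0" using lt by auto
  have "?m \<le> (\<Prod>j<n. 1 / sqrt (1 - 2 * \<sigma>^2 * g j))"
    by (rule chernoff[OF s E pos lt rec g0])
  then have "ln ?m \<le> ln (\<Prod>j<n. 1 / sqrt (1 - 2 * \<sigma>^2 * g j))"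
    using mpos by simp
  also have "\<dots> = (\<Sum>j<n. ln (1 / sqrt (1 - 2 * \<sigma>^2 * g j)))"
  proof (rule ln_prod)
    fix j assume "j \<in> {..<n}"
    then have "1 - 2 * \<sigma>^2 * g j > 0" using tp by auto
    then show "1 / sqrt (1 - 2 * \<sigma>^2 * g j) \<noteq> 0" by simp
  qed simp
  also have "\<dots> = (\<Sum>j<n. - (ln (1 - 2 * \<sigma>^2 * g j) / 2))"
  proof (rule sum.cong)
    fix j assume "j \<in> {..<n}"
    then have t: "1 - 2 * \<sigma>^2 * g j > 0" using tp by auto
    then show "ln (1 / sqrt (1 - 2 * \<sigma>^2 * g j)) = - (ln (1 - 2 * \<sigma>^2 * g j) / 2)"
      by (simp add: ln_div ln_sqrt)
  qed simp
  also have "\<dots> = - (1/2) * (\<Sum>j<n. ln (1 - 2 * \<sigma>^2 * g j))"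
    by (simp add: sum_negf sum_divide_distrib)
  finally have "ln ?m \<le> - (1/2) * (\<Sum>j<n. ln (1 - 2 * \<sigma>^2 * g j))" .
  then have "(1 / real n) * ((1/2) * (\<Sum>j<n. ln (1 - 2 * \<sigma>^2 * g j))) \<le> (1 / real n) * (- ln ?m)"
    using n by (intro mult_left_mono) auto
  then show ?thesis by (simp add: field_simps)
qed

lemma a_ml_ar:
  "a_ml n (\<lambda>i. ar_proc a Z i w) = a_ml n (U a (\<lambda>i\<in>{1..n}. Z i w))"
proof -
  have h: "U a (\<lambda>i\<in>{1..n}. Z i w) i = U a (\<lambda>j. Z j w) i" if "i \<le> n" for i
    using U_restrict[OF that, of a "\<lambda>j. Z j w"] by simp
  show ?thesis
    unfolding a_ml_def ar_proc_U
    by (intro arg_cong2[where f="(/)"] sum.cong refl) (auto simp: h h[simplified])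
qed

lemma box_meas_pos:
  assumes s: "\<sigma> > 0" and n: "n \<ge> 2"
    and E: "E \<in> sets (PiM {1..n} (\<lambda>_. NN \<sigma>))"
    and sub: "PiE {1..n} (bx n c) \<subseteq> E"
  shows "measure (PiM {1..n} (\<lambda>_. NN \<sigma>)) E > 0"
proof -
  let ?P = "PiM {1..n} (\<lambda>_. NN \<sigma>)"
  interpret P: prob_space ?P using prob_PiNN[OF s] .
  interpret product_sigma_finite "\<lambda>_. NN \<sigma>" using sf_NN[OF s] .
  have "emeasure ?P (PiE {1..n} (bx n c)) = (\<Prod>i\<in>{1..n}. emeasure (NN \<sigma>) (bx n c i))"
    by (rule emeasure_PiM) (auto simp: bx_def)
  also have "\<dots> > 0"
  proof -
    have "0 < emeasure (NN \<sigma>) (bx n c i)" for i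
      unfolding bx_def using NN_interval_pos[OF s] by auto
    then show ?thesis by (simp add: zero_less_iff_neq_zero)
  qed
  finally have "0 < emeasure ?P (PiE {1..n} (bx n c))" .
  also have "\<dots> \<le> emeasure ?P E" using E sub by (intro emeasure_mono) auto
  finally have "0 < emeasure ?P E" .
  moreover have "emeasure ?P E = ennreal (measure ?P E)" by (rule P.emeasure_eq_measure)
  ultimately show ?thesis by simp
qed

lemma ff_plus:
  assumes "1 - 2 * \<sigma>^2 * \<gamma> \<noteq> 0"
  shows "ff \<sigma> a s (- (s * (a + \<eta>))) \<gamma>
    = ((a^2 + 2 * \<sigma>^2 * s * (a + \<eta>)) * \<gamma> + (\<sigma>^2 * s^2 - 2 * \<eta> * s) / 2) / (1 - 2 * \<sigma>^2 * \<gamma>)"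
  using assms unfolding ff_def
  by (simp add: field_simps power2_eq_square)

lemma ff_minus:
  assumes "1 - 2 * \<sigma>^2 * \<gamma> \<noteq> 0"
  shows "ff \<sigma> a (- s) (s * (a - \<eta>)) \<gamma>
    = ((a^2 + 2 * \<sigma>^2 * s * (- a + \<eta>)) * \<gamma> + (\<sigma>^2 * s^2 - 2 * \<eta> * s) / 2) / (1 - 2 * \<sigma>^2 * \<gamma>)"
  using assms unfolding ff_def
  by (simp add: field_simps power2_eq_square)




lemma sum_split0: "(n::nat) \<ge> 1 \<Longrightarrow> (\<Sum>j<n. h j) = h 0 + (\<Sum>l=1..n-1. h l)"
proof -
  assume n: "n \<ge> 1"
  have "{..<n} = insert 0 {1..n-1}" using n by auto
  then show ?thesis by simp
qed

lemma alpha_lt: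
  assumes s: "\<sigma> > 0" and "alpha a \<sigma> \<eta> t l < 1 / (2 * \<sigma>^2)"
  shows "2 * \<sigma>^2 * alpha a \<sigma> \<eta> t l < 1"
  using assms by (simp add: less_divide_eq mult.commute)

lemma beta_lt:
  assumes s: "\<sigma> > 0" and "beta a \<sigma> \<eta> t l < 1 / (2 * \<sigma>^2)"
  shows "2 * \<sigma>^2 * beta a \<sigma> \<eta> t l < 1"
  using assms by (simp add: less_divide_eq mult.commute)

lemma plus_bound:
  fixes M :: "'w measure" and Z :: "nat \<Rightarrow> 'w \<Rightarrow> real" and n :: nat
  assumes pM: "prob_space M" and s: "\<sigma> > 0" and a: "a > 1"
    and ind: "prob_space.indep_vars M (\<lambda>_. borel) Z {1..}"
    and dist: "\<And>i. i \<ge> 1 \<Longrightarrow> distributed M lborel (Z i) (\<lambda>x. ennreal (normal_density 0 \<sigma> x))"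
    and eta: "\<eta> > 0" and n: "n \<ge> 2" and t: "t > 0"
    and al: "\<forall>l\<in>{1..n}. alpha a \<sigma> \<eta> t l < 1 / (2 * \<sigma>^2)"
  shows "1 / (2 * real n) * (\<Sum>l=1..n-1. ln (1 - 2 * \<sigma>^2 * alpha a \<sigma> \<eta> t l)) \<le> P_plus M Z n a \<eta>"
proof -
  let ?P = "PiM {1..n} (\<lambda>_. NN \<sigma>)"
  define Ev where "Ev = {x \<in> space ?P. a_ml n (U a x) - a > \<eta>}"
  define g where "g j = (if j = 0 then 0 else alpha a \<sigma> \<eta> t j)" for j
  have Ev: "Ev \<in> sets ?P" unfolding Ev_def by measurable
  have seteq: "{w \<in> space M. a_ml n (\<lambda>i. ar_proc a Z i w) - a > \<eta>} = {w \<in> space M. (\<lambda>i\<in>{1..n}. Z i w) \<in> Ev}"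
    by (auto simp: Ev_def space_PiM a_ml_ar)
  have meq: "measure M {w \<in> space M. a_ml n (\<lambda>i. ar_proc a Z i w) - a > \<eta>} = measure ?P Ev"
    unfolding seteq using n by (intro event_law[OF pM ind dist _ Ev]) auto
  have mpos: "measure ?P Ev > 0"
  proof (rule box_meas_pos[OF s n Ev])
    show "PiE {1..n} (bx n (\<eta> * real (n-1) * (2 * (a+1)^n)^2 + 1)) \<subseteq> Ev"
      using box_plus[OF a n eta] by (auto simp: Ev_def space_PiM)
  qed
  have pos: "Phi a t (- (t * (a + \<eta>))) 0 x n \<ge> 0" if x: "x \<in> Ev" for x
  proof -
    have h: "a_ml n (U a x) - a > \<eta>" using x by (simp add: Ev_def)
    have D0: "Dsum a x n \<ge> 0" by (rule Dsum_nonneg)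
    show ?thesis
    proof (cases "Dsum a x n = 0")
      case True
      then show ?thesis using h a eta by (simp add: a_ml_U)
    next
      case False
      then have Dp: "Dsum a x n > 0" using D0 by simp
      have "Nsum a x n / Dsum a x n > a + \<eta>" using h by (simp add: a_ml_U)
      then have "Nsum a x n > (a + \<eta>) * Dsum a x n" using Dp by (simp add: pos_less_divide_eq)
      then have "t * ((a + \<eta>) * Dsum a x n) \<le> t * Nsum a x n" using t by simp
      then show ?thesis using n by (simp add: Phi_sum algebra_simps)
    qed
  qed
  have lt: "\<forall>j<n. 2 * \<sigma>^2 * g j < 1"
    using al alpha_lt[OF s] by (auto simp: g_def)
  have rec: "\<forall>j. Suc j < n \<longrightarrow> g (Suc j) = ff \<sigma> a t (- (t * (a + \<eta>))) (g j)"
  proof (intro allI impI)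
    fix j assume j: "Suc j < n"
    show "g (Suc j) = ff \<sigma> a t (- (t * (a + \<eta>))) (g j)"
    proof (cases j)
      case 0
      then show ?thesis by (simp add: g_def alpha_def ff_plus)
    next
      case (Suc m)
      have "2 * \<sigma>^2 * alpha a \<sigma> \<eta> t (Suc m) < 1" using al j Suc by (intro alpha_lt[OF s]) auto
      then have ne: "1 - 2 * \<sigma>^2 * rec_seq a a \<sigma> \<eta> t m \<noteq> 0" by (simp add: alpha_def)
      show ?thesis using Suc ff_plus[OF ne] by (simp add: g_def alpha_def)
    qed
  qed
  have "1 / (2 * real n) * (\<Sum>j<n. ln (1 - 2 * \<sigma>^2 * g j)) \<le> - (1 / real n) * ln (measure ?P Ev)"
    using n by (intro core_bound[OF s _ Ev mpos pos lt rec]) (auto simp: g_def)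
  moreover have "(\<Sum>j<n. ln (1 - 2 * \<sigma>^2 * g j)) = (\<Sum>l=1..n-1. ln (1 - 2 * \<sigma>^2 * alpha a \<sigma> \<eta> t l))"
    using n by (simp add: sum_split0[of n] g_def)
  ultimately show ?thesis
    unfolding P_plus_def meq by simp
qed

lemma minus_bound:
  fixes M :: "'w measure" and Z :: "nat \<Rightarrow> 'w \<Rightarrow> real" and n :: nat
  assumes pM: "prob_space M" and s: "\<sigma> > 0" and a: "a > 1"
    and ind: "prob_space.indep_vars M (\<lambda>_. borel) Z {1..}"
    and dist: "\<And>i. i \<ge> 1 \<Longrightarrow> distributed M lborel (Z i) (\<lambda>x. ennreal (normal_density 0 \<sigma> x))"
    and eta: "\<eta> > 0" and n: "n \<ge> 2" and t: "t > 0"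
    and al: "\<forall>l\<in>{1..n}. beta a \<sigma> \<eta> t l < 1 / (2 * \<sigma>^2)"
  shows "1 / (2 * real n) * (\<Sum>l=1..n-1. ln (1 - 2 * \<sigma>^2 * beta a \<sigma> \<eta> t l)) \<le> P_minus M Z n a \<eta>"
proof -
  let ?P = "PiM {1..n} (\<lambda>_. NN \<sigma>)"
  define Ev where "Ev = {x \<in> space ?P. a_ml n (U a x) - a < - \<eta>}"
  define g where "g j = (if j = 0 then 0 else beta a \<sigma> \<eta> t j)" for j
  have Ev: "Ev \<in> sets ?P" unfolding Ev_def by measurable
  have seteq: "{w \<in> space M. a_ml n (\<lambda>i. ar_proc a Z i w) - a < - \<eta>} = {w \<in> space M. (\<lambda>i\<in>{1..n}. Z i w) \<in> Ev}"
    by (auto simp: Ev_def space_PiM a_ml_ar)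
  have meq: "measure M {w \<in> space M. a_ml n (\<lambda>i. ar_proc a Z i w) - a < - \<eta>} = measure ?P Ev"
    unfolding seteq using n by (intro event_law[OF pM ind dist _ Ev]) auto
  have mpos: "measure ?P Ev > 0"
  proof (rule box_meas_pos[OF s n Ev])
    show "PiE {1..n} (bx n (- (\<eta> * real (n-1) * (2 * (a+1)^n)^2 + real (n-1) * (2 * (a+1)^n) + 2))) \<subseteq> Ev"
      using box_minus[OF a n eta] by (auto simp: Ev_def space_PiM)
  qed
  have pos: "Phi a (- t) (t * (a - \<eta>)) 0 x n \<ge> 0" if x: "x \<in> Ev" for x
  proof -
    have h: "a_ml n (U a x) - a < - \<eta>" using x by (simp add: Ev_def)
    have D0: "Dsum a x n \<ge> 0" by (rule Dsum_nonneg)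
    show ?thesis
    proof (cases "Dsum a x n = 0")
      case True
      then show ?thesis using n Dsum_zero[OF True] by (simp add: Phi_sum)
    next
      case False
      then have Dp: "Dsum a x n > 0" using D0 by simp
      have "Nsum a x n / Dsum a x n < a - \<eta>" using h by (simp add: a_ml_U)
      then have "Nsum a x n < (a - \<eta>) * Dsum a x n" using Dp by (simp add: pos_divide_less_eq)
      then have "t * Nsum a x n \<le> t * ((a - \<eta>) * Dsum a x n)" using t by simp
      then show ?thesis using n by (simp add: Phi_sum algebra_simps)
    qed
  qed
  have lt: "\<forall>j<n. 2 * \<sigma>^2 * g j < 1"
    using al beta_lt[OF s] by (auto simp: g_def)
  have rec: "\<forall>j. Suc j < n \<longrightarrow> g (Suc j) = ff \<sigma> a (- t) (t * (a - \<eta>)) (g j)"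
  proof (intro allI impI)
    fix j assume j: "Suc j < n"
    show "g (Suc j) = ff \<sigma> a (- t) (t * (a - \<eta>)) (g j)"
    proof (cases j)
      case 0
      then show ?thesis by (simp add: g_def beta_def ff_minus)
    next
      case (Suc m)
      have "2 * \<sigma>^2 * beta a \<sigma> \<eta> t (Suc m) < 1" using al j Suc by (intro beta_lt[OF s]) auto
      then have ne: "1 - 2 * \<sigma>^2 * rec_seq a (- a) \<sigma> \<eta> t m \<noteq> 0" by (simp add: beta_def)
      show ?thesis using Suc ff_minus[OF ne] by (simp add: g_def beta_def)
    qed
  qed
  have "1 / (2 * real n) * (\<Sum>j<n. ln (1 - 2 * \<sigma>^2 * g j)) \<le> - (1 / real n) * ln (measure ?P Ev)"
    using n by (intro core_bound[OF s _ Ev mpos pos lt rec]) (auto simp: g_def)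
  moreover have "(\<Sum>j<n. ln (1 - 2 * \<sigma>^2 * g j)) = (\<Sum>l=1..n-1. ln (1 - 2 * \<sigma>^2 * beta a \<sigma> \<eta> t l))"
    using n by (simp add: sum_split0[of n] g_def)
  ultimately show ?thesis
    unfolding P_minus_def meq by simp
qed




lemma rec_lower:
  fixes a b \<sigma> \<eta> s :: real
  defines "A \<equiv> a^2 + 2 * \<sigma>^2 * s * (b + \<eta>)"
  defines "d \<equiv> - 2 * \<sigma>^2 * rec_seq a b \<sigma> \<eta> s 0"
  assumes A1: "A > 1" and d0: "d > 0"
  shows "- 2 * \<sigma>^2 * rec_seq a b \<sigma> \<eta> s k > 0 \<and>
         1 / (- 2 * \<sigma>^2 * rec_seq a b \<sigma> \<eta> s k) \<le> (1/A)^k / d + 1 / (A - 1)"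
proof (induction k)
  case 0
  have e: "- 2 * \<sigma>^2 * rec_seq a b \<sigma> \<eta> s 0 = d" by (simp add: d_def)
  show ?case unfolding e using d0 A1 by simp
next
  case (Suc k)
  define X where "X = - 2 * \<sigma>^2 * rec_seq a b \<sigma> \<eta> s k"
  have X0: "X > 0" and Xb: "1 / X \<le> (1/A)^k / d + 1 / (A - 1)" using Suc by (auto simp: X_def)
  have den: "1 - 2 * \<sigma>^2 * rec_seq a b \<sigma> \<eta> s k = 1 + X" by (simp add: X_def)
  have eq: "- 2 * \<sigma>^2 * rec_seq a b \<sigma> \<eta> s (Suc k) = (A * X + d) / (1 + X)"
    unfolding rec_seq.simps(2)[of a b \<sigma> \<eta> s k] den
    by (simp add: A_def d_def X_def field_simps)
  have pos: "(A * X + d) / (1 + X) > 0" using X0 A1 d0 by (intro divide_pos_pos add_pos_pos mult_pos_pos) auto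
  have "1 / ((A * X + d) / (1 + X)) = (1 + X) / (A * X + d)" by simp
  also have "\<dots> \<le> (1 + X) / (A * X)"
    using X0 A1 d0 by (intro divide_left_mono) (auto intro!: mult_pos_pos add_pos_pos)
  also have "\<dots> = (1 / X + 1) / A" using X0 A1 by (simp add: field_simps)
  also have "\<dots> \<le> ((1/A)^k / d + 1 / (A - 1) + 1) / A"
    using Xb A1 by (intro divide_right_mono) auto
  also have "\<dots> = (1/A)^(Suc k) / d + 1 / (A - 1)"
  proof -
    have "A \<noteq> 0" "A - 1 \<noteq> 0" "d \<noteq> 0" using A1 d0 by auto
    then show ?thesis by (simp add: field_simps power_one_over)
  qed
  finally show ?case using pos eq by simp
qed

lemma count_lb:
  fixes c :: real
  assumes "c \<ge> 0"
  shows "(\<Sum>k<m. if K \<le> k then c else 0) \<ge> (real m - real K) * c"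
proof (induction m)
  case 0 then show ?case using assms by simp
next
  case (Suc m)
  show ?case
  proof (cases "K \<le> m")
    case True then show ?thesis using Suc by (simp add: algebra_simps)
  next
    case False
    then have "(real (Suc m) - real K) * c \<le> 0" using assms by (intro mult_nonpos_nonneg) auto
    moreover have "0 \<le> (\<Sum>k<Suc m. if K \<le> k then c else 0)" using assms by (intro sum_nonneg) auto
    ultimately show ?thesis by linarith
  qed
qed

lemma rec_sum_bound:
  fixes a b \<sigma> \<eta> \<theta> :: real and n :: nat
  assumes s: "\<sigma> > 0" and eta: "\<eta> > 0" and th: "\<theta> > 0" and A0: "a^2 - 2 * a * \<theta> > 1"
    and Age: "a^2 + 2 * min \<eta> \<theta> * (b + \<eta>) \<ge> a^2 - 2 * a * \<theta>"
    and dn: "2 * \<eta> * min \<eta> \<theta> - (min \<eta> \<theta>)^2 \<ge> 1 / real n" and n: "n \<ge> 1"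
  defines "t \<equiv> min \<eta> \<theta> / \<sigma>^2"
  defines "K \<equiv> nat \<lceil>ln (real n / \<theta>) / ln (a^2 - 2 * a * \<theta>)\<rceil>"
  defines "c \<equiv> ln (1 + 1 / (\<theta> + 1 / (a^2 - 2 * a * \<theta> - 1)))"
  shows "\<forall>k. rec_seq a b \<sigma> \<eta> t k < 0"
    and "(\<Sum>l=1..n-1. ln (1 - 2 * \<sigma>^2 * rec_seq a b \<sigma> \<eta> t (l - 1))) \<ge> (real (n-1) - real K) * c"
proof -
  define A0' where "A0' = a^2 - 2 * a * \<theta>"
  define \<tau> where "\<tau> = min \<eta> \<theta>"
  define A where "A = a^2 + 2 * \<sigma>^2 * t * (b + \<eta>)"
  define d where "d = - 2 * \<sigma>^2 * rec_seq a b \<sigma> \<eta> t 0"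
  have st: "\<sigma>^2 * t = \<tau>" using s by (simp add: t_def \<tau>_def)
  have tau0: "\<tau> > 0" using eta th by (simp add: \<tau>_def)
  have AA: "A = a^2 + 2 * \<tau> * (b + \<eta>)" unfolding A_def by (simp add: st[symmetric] algebra_simps)
  have "d = 2 * \<eta> * (\<sigma>^2 * t) - (\<sigma>^2 * t)^2"
    unfolding d_def by (auto simp: power2_eq_square field_simps)
  then have dd: "d = 2 * \<eta> * \<tau> - \<tau>^2" by (simp add: st)
  have AgeA0: "A \<ge> A0'" using Age by (simp add: AA A0'_def \<tau>_def)
  have A1: "A > 1" using AgeA0 A0 by (simp add: A0'_def)
  have dn': "d \<ge> 1 / real n" using dn by (simp add: dd \<tau>_def)
  have dpos: "d > 0" using dn' n by (smt (verit) of_nat_0_less_iff divide_pos_pos less_le_trans zero_less_one le_less_trans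
        not_one_le_zero)
  note RL = rec_lower[of a \<sigma> t b \<eta>, folded A_def d_def, OF A1 dpos]
  show "\<forall>k. rec_seq a b \<sigma> \<eta> t k < 0"
  proof
    fix k
    have "- 2 * \<sigma>^2 * rec_seq a b \<sigma> \<eta> t k > 0" using RL by blast
    show "rec_seq a b \<sigma> \<eta> t k < 0"
    proof (rule ccontr)
      assume "\<not> rec_seq a b \<sigma> \<eta> t k < 0"
      then have "0 \<le> \<sigma>^2 * rec_seq a b \<sigma> \<eta> t k" by simp
      then show False using \<open>- 2 * \<sigma>^2 * rec_seq a b \<sigma> \<eta> t k > 0\<close> by linarith
    qed
  qed
  define X where "X k = - 2 * \<sigma>^2 * rec_seq a b \<sigma> \<eta> t k" for k
  have c0: "c \<ge> 0" using A0 th unfolding c_def by simp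
  have A0p: "A0' > 1" using A0 by (simp add: A0'_def)
  have powK: "A0'^K \<ge> real n / \<theta>"
  proof -
    have "ln (real n / \<theta>) / ln A0' \<le> real K" unfolding K_def A0'_def by linarith
    then have "ln (real n / \<theta>) \<le> real K * ln A0'" using A0p by (simp add: divide_le_eq)
    also have "\<dots> = ln (A0'^K)" using A0p by (simp add: ln_realpow)
    finally show ?thesis using A0p n th by simp
  qed
  have term_lb: "ln (1 + X k) \<ge> (if K \<le> k then c else 0)" for k
  proof -
    have Xp: "X k > 0" and Xb: "1 / X k \<le> (1/A)^k / d + 1 / (A - 1)" using RL by (auto simp: X_def)
    show ?thesis
    proof (cases "K \<le> k")
      case False then show ?thesis using Xp by simp
    next
      case True
      have "(1/A)^k \<le> (1/A0')^k" using AgeA0 A0p by (intro power_mono) (auto simp: field_simps)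
      also have "\<dots> \<le> (1/A0')^K" using True A0p by (intro power_decreasing) auto
      also have "\<dots> = 1 / A0'^K" by (simp add: power_one_over)
      also have "\<dots> \<le> \<theta> / real n" using powK n th A0p by (simp add: field_simps)
      finally have p1: "(1/A)^k \<le> \<theta> / real n" .
      have "(1/A)^k / d \<le> (\<theta> / real n) / d" using p1 dpos by (intro divide_right_mono) auto
      also have "\<dots> \<le> (\<theta> / real n) / (1 / real n)" using dn' n th dpos by (intro divide_left_mono) auto
      also have "\<dots> = \<theta>" using n by simp
      finally have q1: "(1/A)^k / d \<le> \<theta>" .
      have q2: "1 / (A - 1) \<le> 1 / (A0' - 1)" using AgeA0 A0p by (intro divide_left_mono) auto
      have "1 / X k \<le> \<theta> + 1 / (A0' - 1)" using Xb q1 q2 by linarith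
      moreover have wpos: "\<theta> + 1 / (A0' - 1) > 0" using th A0p by (intro add_pos_pos) auto
      ultimately have "1 \<le> (\<theta> + 1 / (A0' - 1)) * X k" using Xp by (simp add: divide_le_eq)
      then have "1 / (\<theta> + 1 / (A0' - 1)) \<le> X k"
        using wpos by (simp add: divide_le_eq mult.commute)
      then have "ln (1 + 1 / (\<theta> + 1 / (A0' - 1))) \<le> ln (1 + X k)"
        using wpos Xp by (subst ln_le_cancel_iff) (auto intro!: add_pos_pos)
      then show ?thesis using True by (simp add: c_def A0'_def)
    qed
  qed
  have "(\<Sum>l=1..n-1. ln (1 - 2 * \<sigma>^2 * rec_seq a b \<sigma> \<eta> t (l - 1))) = (\<Sum>k<n-1. ln (1 + X k))"
    by (simp add: sum.atLeast1_atMost_eq X_def)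
  also have "\<dots> \<ge> (\<Sum>k<n-1. if K \<le> k then c else 0)"
    using term_lb by (intro sum_mono) auto
  finally show "(\<Sum>l=1..n-1. ln (1 - 2 * \<sigma>^2 * rec_seq a b \<sigma> \<eta> t (l - 1))) \<ge> (real (n-1) - real K) * c"
    using count_lb[OF c0, of "n-1" K] by linarith
qed




lemma Pn_lower:
  fixes M :: "'w measure" and Z :: "nat \<Rightarrow> 'w \<Rightarrow> real" and n :: nat
  assumes pM: "prob_space M" and s: "\<sigma> > 0" and a: "a > 1"
    and ind: "prob_space.indep_vars M (\<lambda>_. borel) Z {1..}"
    and dist: "\<And>i. i \<ge> 1 \<Longrightarrow> distributed M lborel (Z i) (\<lambda>x. ennreal (normal_density 0 \<sigma> x))"
    and eta: "\<eta> > 0" and n: "n \<ge> 2" and th: "\<theta> > 0" and A0: "a^2 - 2 * a * \<theta> > 1"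
    and en: "1 / sqrt (real n) \<le> \<eta>" and tn: "1 / sqrt (real n) \<le> \<theta>"
  defines "K \<equiv> nat \<lceil>ln (real n / \<theta>) / ln (a^2 - 2 * a * \<theta>)\<rceil>"
  defines "c \<equiv> ln (1 + 1 / (\<theta> + 1 / (a^2 - 2 * a * \<theta> - 1)))"
  shows "(real (n-1) - real K) * c / (2 * real n) \<le> P_plus M Z n a \<eta>"
    and "(real (n-1) - real K) * c / (2 * real n) \<le> P_minus M Z n a \<eta>"
proof -
  define \<tau> where "\<tau> = min \<eta> \<theta>"
  define t where "t = \<tau> / \<sigma>^2"
  have tau0: "\<tau> > 0" using eta th by (simp add: \<tau>_def)
  have t0: "t > 0" using tau0 s by (simp add: t_def)
  have taun: "1 / sqrt (real n) \<le> \<tau>" using en tn by (simp add: \<tau>_def)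
  have tle: "\<tau> \<le> \<eta>" "\<tau> \<le> \<theta>" by (auto simp: \<tau>_def)
  have n1: "n \<ge> 1" using n by simp
  have dn: "2 * \<eta> * \<tau> - \<tau>^2 \<ge> 1 / real n"
  proof -
    have "1 / real n = (1 / sqrt (real n)) * (1 / sqrt (real n))"
      using n by (simp add: real_sqrt_mult[symmetric])
    also have "\<dots> \<le> \<tau> * \<eta>" using taun en tau0 by (intro mult_mono) auto
    also have "\<tau> * \<eta> \<le> 2 * \<eta> * \<tau> - \<tau>^2" using tle tau0 by (simp add: power2_eq_square algebra_simps mult_right_mono)
    finally show ?thesis .
  qed
  have Age_p: "a^2 + 2 * \<tau> * (a + \<eta>) \<ge> a^2 - 2 * a * \<theta>"
  proof -
    have "0 \<le> \<tau> * (a + \<eta>)" using tau0 a eta by simp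
    moreover have "0 \<le> a * \<theta>" using a th by simp
    ultimately show ?thesis by linarith
  qed
  have Age_m: "a^2 + 2 * \<tau> * (- a + \<eta>) \<ge> a^2 - 2 * a * \<theta>"
  proof -
    have "\<tau> * a \<le> \<theta> * a" using tle a by (intro mult_right_mono) auto
    moreover have "0 \<le> \<tau> * \<eta>" using tau0 eta by simp
    ultimately show ?thesis by (simp add: algebra_simps)
  qed
  note RP = rec_sum_bound[OF s eta th A0 Age_p[unfolded \<tau>_def] dn[unfolded \<tau>_def] n1, folded \<tau>_def K_def c_def, folded t_def]
  note RM = rec_sum_bound[OF s eta th A0 Age_m[unfolded \<tau>_def] dn[unfolded \<tau>_def] n1, folded \<tau>_def K_def c_def, folded t_def]
  have inv: "0 < 1 / (2 * \<sigma>^2)" using s by simp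
  have alp: "\<forall>l\<in>{1..n}. alpha a \<sigma> \<eta> t l < 1 / (2 * \<sigma>^2)"
    using RP(1) inv unfolding alpha_def by (meson less_trans)
  have bet: "\<forall>l\<in>{1..n}. beta a \<sigma> \<eta> t l < 1 / (2 * \<sigma>^2)"
    using RM(1) inv unfolding beta_def by (meson less_trans)
  have np: "real n > 0" using n by simp
  have "(real (n-1) - real K) * c / (2 * real n) \<le> 1 / (2 * real n) * (\<Sum>l=1..n-1. ln (1 - 2 * \<sigma>^2 * alpha a \<sigma> \<eta> t l))"
    using RP(2) np by (simp add: alpha_def divide_right_mono)
  also have "\<dots> \<le> P_plus M Z n a \<eta>" by (rule plus_bound[OF pM s a ind dist eta n t0 alp])
  finally show "(real (n-1) - real K) * c / (2 * real n) \<le> P_plus M Z n a \<eta>" .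
  have "(real (n-1) - real K) * c / (2 * real n) \<le> 1 / (2 * real n) * (\<Sum>l=1..n-1. ln (1 - 2 * \<sigma>^2 * beta a \<sigma> \<eta> t l))"
    using RM(2) np by (simp add: beta_def divide_right_mono)
  also have "\<dots> \<le> P_minus M Z n a \<eta>" by (rule minus_bound[OF pM s a ind dist eta n t0 bet])
  finally show "(real (n-1) - real K) * c / (2 * real n) \<le> P_minus M Z n a \<eta>" .
qed

lemma lim_test1: "(\<lambda>n::nat. 1 / sqrt (real n)) \<longlonglongrightarrow> 0"
  by real_asymp

lemma lim_test2:
  fixes C L :: real assumes "L > 0"
  shows "(\<lambda>n::nat. (2 + (ln (real n) + C) / L) / real n) \<longlonglongrightarrow> 0"
  using assms by real_asymp




lemma lim_K:
  fixes \<theta> L :: real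
  assumes th: "\<theta> > 0" and L: "L > 0"
  shows "(\<lambda>n. (1 + real (nat \<lceil>ln (real n / \<theta>) / L\<rceil>)) / real n) \<longlonglongrightarrow> 0"
proof (rule tendsto_sandwich[where f="\<lambda>_. 0" and h="\<lambda>n. (2 + (ln (real n) + \<bar>ln \<theta>\<bar>) / L) / real n"])
  show "eventually (\<lambda>n. 0 \<le> (1 + real (nat \<lceil>ln (real n / \<theta>) / L\<rceil>)) / real n) sequentially"
    by simp
  show "eventually (\<lambda>n. (1 + real (nat \<lceil>ln (real n / \<theta>) / L\<rceil>)) / real n
      \<le> (2 + (ln (real n) + \<bar>ln \<theta>\<bar>) / L) / real n) sequentially"
    using eventually_ge_at_top[of "1::nat"]
  proof eventually_elim
    case (elim n)
    define x where "x = ln (real n / \<theta>) / L"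
    have c1: "real (nat \<lceil>x\<rceil>) \<le> \<bar>x\<bar> + 1"
    proof (cases "\<lceil>x\<rceil> \<ge> 0")
      case True
      then have "real (nat \<lceil>x\<rceil>) = real_of_int \<lceil>x\<rceil>" by simp
      also have "\<dots> \<le> x + 1" by (rule of_int_ceiling_le_add_one)
      finally show ?thesis by linarith
    next
      case False then show ?thesis by simp
    qed
    have ln0: "ln (real n) \<ge> 0" using elim by simp
    have e: "ln (real n / \<theta>) = ln (real n) - ln \<theta>" using elim th by (simp add: ln_div)
    have "\<bar>ln (real n / \<theta>)\<bar> \<le> ln (real n) + \<bar>ln \<theta>\<bar>"
      unfolding e using ln0 by (smt (verit))
    then have "\<bar>x\<bar> \<le> (ln (real n) + \<bar>ln \<theta>\<bar>) / L"
      using L by (simp add: x_def abs_div divide_right_mono)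
    then have "1 + real (nat \<lceil>x\<rceil>) \<le> 2 + (ln (real n) + \<bar>ln \<theta>\<bar>) / L" using c1 by linarith
    then show ?case unfolding x_def[symmetric] using elim by (intro divide_right_mono) auto
  qed
  show "(\<lambda>n. (2 + (ln (real n) + \<bar>ln \<theta>\<bar>) / L) / real n) \<longlonglongrightarrow> 0"
    using L by real_asymp
qed simp

lemma liminf_lb:
  fixes f :: "nat \<Rightarrow> real"
  assumes "\<And>e. e > 0 \<Longrightarrow> eventually (\<lambda>n. b - e \<le> f n) sequentially"
  shows "ereal b \<le> liminf (\<lambda>n. ereal (f n))"
proof (rule ereal_le_epsilon2)
  fix e :: real assume e: "e > 0"
  have "ereal (b - e) \<le> liminf (\<lambda>n. ereal (f n))"
    by (rule Liminf_bounded) (use assms[OF e] in \<open>auto elim: eventually_mono\<close>)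
  then show "ereal b \<le> liminf (\<lambda>n. ereal (f n)) + ereal e"
    by (cases "liminf (\<lambda>n. ereal (f n))") auto
qed

lemma c_limit:
  fixes a :: real assumes a: "a > 1"
  shows "((\<lambda>\<theta>. ln (1 + 1 / (\<theta> + 1 / (a^2 - 2 * a * \<theta> - 1)))) \<longlongrightarrow> 2 * ln a) (at_right 0)"
proof -
  have a2: "a^2 - 1 > 0" using a by (simp add: one_less_power)
  have "((\<lambda>\<theta>. ln (1 + 1 / (\<theta> + 1 / (a^2 - 2 * a * \<theta> - 1)))) \<longlongrightarrow> ln (1 + 1 / (0 + 1 / (a^2 - 2 * a * 0 - 1)))) (at_right 0)"
    using a2 by (intro tendsto_intros) auto
  moreover have "ln (1 + 1 / (0 + 1 / (a^2 - 2 * a * 0 - 1))) = 2 * ln a"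
    using a by (simp add: ln_realpow)
  ultimately show ?thesis by simp
qed

lemma liminf_part:
  fixes M :: "'w measure" and Z :: "nat \<Rightarrow> 'w \<Rightarrow> real" and \<eta> :: "nat \<Rightarrow> real"
  assumes pM: "prob_space M" and s: "\<sigma> > 0" and a: "a > 1"
    and ind: "prob_space.indep_vars M (\<lambda>_. borel) Z {1..}"
    and dist: "\<And>i. i \<ge> 1 \<Longrightarrow> distributed M lborel (Z i) (\<lambda>x. ennreal (normal_density 0 \<sigma> x))"
    and eta: "\<And>n. \<eta> n > 0"
    and lim: "filterlim (\<lambda>n. sqrt (real n) * \<eta> n) at_top sequentially"
  shows "ereal (ln a) \<le> liminf (\<lambda>n. ereal (P_plus M Z n a (\<eta> n)))"
    and "ereal (ln a) \<le> liminf (\<lambda>n. ereal (P_minus M Z n a (\<eta> n)))"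
proof -
  have main: "eventually (\<lambda>n. ln a - e \<le> P_plus M Z n a (\<eta> n) \<and> ln a - e \<le> P_minus M Z n a (\<eta> n)) sequentially"
    if e: "e > 0" for e
  proof -
    have "eventually (\<lambda>\<theta>. ln (1 + 1 / (\<theta> + 1 / (a^2 - 2 * a * \<theta> - 1))) > 2 * ln a - e) (at_right 0)"
      using c_limit[OF a] e by (intro order_tendstoD(1)) auto
    then obtain b where b: "b > 0" and hb: "\<And>y. y > 0 \<Longrightarrow> y < b \<Longrightarrow> ln (1 + 1 / (y + 1 / (a^2 - 2 * a * y - 1))) > 2 * ln a - e"
      unfolding eventually_at_right_field by auto
    define \<theta> where "\<theta> = min (b / 2) ((a^2 - 1) / (4 * a))"
    have a2: "a^2 - 1 > 0" using a by (simp add: one_less_power)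
    have th: "\<theta> > 0" using b a a2 by (simp add: \<theta>_def)
    have thb: "\<theta> < b" using b by (simp add: \<theta>_def)
    have "2 * a * \<theta> \<le> 2 * a * ((a^2 - 1) / (4 * a))" using a by (intro mult_left_mono) (auto simp: \<theta>_def)
    also have "\<dots> = (a^2 - 1) / 2" using a by (simp add: field_simps)
    finally have A0: "a^2 - 2 * a * \<theta> > 1" using a2 by (simp add: field_simps)
    define c where "c = ln (1 + 1 / (\<theta> + 1 / (a^2 - 2 * a * \<theta> - 1)))"
    have cgt: "c > 2 * ln a - e" using hb[OF th thb] by (simp add: c_def)
    have c0: "c \<ge> 0" using A0 th unfolding c_def by simp
    define L where "L = ln (a^2 - 2 * a * \<theta>)"
    have L0: "L > 0" using A0 by (simp add: L_def)
    define K where "K n = nat \<lceil>ln (real n / \<theta>) / L\<rceil>" for n :: nat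
    have "(\<lambda>n. c / 2 * ((1 + real (K n)) / real n)) \<longlonglongrightarrow> c / 2 * 0"
      unfolding K_def by (intro tendsto_mult tendsto_const lim_K th L0)
    then have ev1: "eventually (\<lambda>n. c / 2 * ((1 + real (K n)) / real n) < e / 2) sequentially"
      using e by (intro order_tendstoD(2)) auto
    have ev2: "eventually (\<lambda>n. 1 / sqrt (real n) < \<theta>) sequentially"
      using lim_test1 th by (intro order_tendstoD(2)) auto
    have ev3: "eventually (\<lambda>n. 1 \<le> sqrt (real n) * \<eta> n) sequentially"
      using lim by (simp add: filterlim_at_top)
    show ?thesis
      using ev1 ev2 ev3 eventually_ge_at_top[of "2::nat"]
    proof eventually_elim
      case (elim n)
      have n: "n \<ge> 2" using elim by simp
      have sq: "sqrt (real n) > 0" using n by simp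
      have en: "1 / sqrt (real n) \<le> \<eta> n" using elim(3) sq by (simp add: divide_le_eq mult.commute)
      note PL = Pn_lower[OF pM s a ind dist eta n th A0 en less_imp_le[OF elim(2)], folded L_def K_def c_def]
      have np: "real n > 0" using n by simp
      have "(real (n-1) - real (K n)) * c / (2 * real n) = c / 2 - c / 2 * ((1 + real (K n)) / real n)"
        using n np by (simp add: of_nat_diff field_simps)
      also have "\<dots> \<ge> ln a - e" using elim(1) cgt by linarith
      finally have lb: "ln a - e \<le> (real (n-1) - real (K n)) * c / (2 * real n)" .
      show ?case using lb PL by linarith
    qed
  qed
  show "ereal (ln a) \<le> liminf (\<lambda>n. ereal (P_plus M Z n a (\<eta> n)))"
  proof (rule liminf_lb)
    fix e :: real assume "e > 0"
    from main[OF this] show "eventually (\<lambda>n. ln a - e \<le> P_plus M Z n a (\<eta> n)) sequentially"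
      by (rule eventually_mono) auto
  qed
  show "ereal (ln a) \<le> liminf (\<lambda>n. ereal (P_minus M Z n a (\<eta> n)))"
  proof (rule liminf_lb)
    fix e :: real assume "e > 0"
    from main[OF this] show "eventually (\<lambda>n. ln a - e \<le> P_minus M Z n a (\<eta> n)) sequentially"
      by (rule eventually_mono) auto
  qed
qed

theorem theorem3:
  fixes M :: "'w measure" and Z :: "nat \<Rightarrow> 'w \<Rightarrow> real"
    and \<sigma> a :: real and \<eta> :: "nat \<Rightarrow> real"
  assumes "prob_space M"
    and "\<sigma> > 0" and "a > 1"
    and "prob_space.indep_vars M (\<lambda>_. borel) Z {1..}"
    and "\<And>i. i \<ge> 1 \<Longrightarrow> distributed M lborel (Z i) (\<lambda>x. ennreal (normal_density 0 \<sigma> x))"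
    and "\<And>n. \<eta> n > 0"
    and "filterlim (\<lambda>n. sqrt (real n) * \<eta> n) at_top sequentially"
  shows "(\<forall>n\<ge>2.
           ereal (P_plus M Z n a (\<eta> n)) \<ge>
             (SUP s\<in>{s. s > 0 \<and> (\<forall>l\<in>{1..n}. alpha a \<sigma> (\<eta> n) s l < 1 / (2 * \<sigma>^2))}.
                ereal (1 / (2 * real n) * (\<Sum>l=1..n-1. ln (1 - 2 * \<sigma>^2 * alpha a \<sigma> (\<eta> n) s l))))
         \<and> ereal (P_minus M Z n a (\<eta> n)) \<ge>
             (SUP s\<in>{s. s > 0 \<and> (\<forall>l\<in>{1..n}. beta a \<sigma> (\<eta> n) s l < 1 / (2 * \<sigma>^2))}.
                ereal (1 / (2 * real n) * (\<Sum>l=1..n-1. ln (1 - 2 * \<sigma>^2 * beta a \<sigma> (\<eta> n) s l)))))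
       \<and> liminf (\<lambda>n. ereal (P_plus M Z n a (\<eta> n))) \<ge> ereal (ln a)
       \<and> liminf (\<lambda>n. ereal (P_minus M Z n a (\<eta> n))) \<ge> ereal (ln a)"
proof -
  note pM = assms(1) and s = assms(2) and a = assms(3) and ind = assms(4) and dist = assms(5)
    and eta = assms(6) and lim = assms(7)
  have part1: "\<forall>n\<ge>2.
           ereal (P_plus M Z n a (\<eta> n)) \<ge>
             (SUP s\<in>{s. s > 0 \<and> (\<forall>l\<in>{1..n}. alpha a \<sigma> (\<eta> n) s l < 1 / (2 * \<sigma>^2))}.
                ereal (1 / (2 * real n) * (\<Sum>l=1..n-1. ln (1 - 2 * \<sigma>^2 * alpha a \<sigma> (\<eta> n) s l))))
         \<and> ereal (P_minus M Z n a (\<eta> n)) \<ge>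
             (SUP s\<in>{s. s > 0 \<and> (\<forall>l\<in>{1..n}. beta a \<sigma> (\<eta> n) s l < 1 / (2 * \<sigma>^2))}.
                ereal (1 / (2 * real n) * (\<Sum>l=1..n-1. ln (1 - 2 * \<sigma>^2 * beta a \<sigma> (\<eta> n) s l))))"
  proof (intro allI impI conjI)
    fix n :: nat assume n: "n \<ge> 2"
    show "ereal (P_plus M Z n a (\<eta> n)) \<ge>
             (SUP s\<in>{s. s > 0 \<and> (\<forall>l\<in>{1..n}. alpha a \<sigma> (\<eta> n) s l < 1 / (2 * \<sigma>^2))}.
                ereal (1 / (2 * real n) * (\<Sum>l=1..n-1. ln (1 - 2 * \<sigma>^2 * alpha a \<sigma> (\<eta> n) s l))))"
      by (rule SUP_least) (use plus_bound[OF pM s a ind dist eta n] in auto)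
    show "ereal (P_minus M Z n a (\<eta> n)) \<ge>
             (SUP s\<in>{s. s > 0 \<and> (\<forall>l\<in>{1..n}. beta a \<sigma> (\<eta> n) s l < 1 / (2 * \<sigma>^2))}.
                ereal (1 / (2 * real n) * (\<Sum>l=1..n-1. ln (1 - 2 * \<sigma>^2 * beta a \<sigma> (\<eta> n) s l))))"
      by (rule SUP_least) (use minus_bound[OF pM s a ind dist eta n] in auto)
  qed
  show ?thesis
    using part1 liminf_part[OF pM s a ind dist eta lim] by blast
qed


end
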